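(* Let $\varphi$ be an Orlicz $N$-function with Young–Fenchel transform $\psi$ and let $q_\varphi$ be the generalized inverse of the density of $\varphi$. Let $\{X_{k,n},k,n\ge1\}$ be a double array of independent $\varphi$-subgaussian random variables, and let $g$ be a positive non-decreasing function with $\tau_\varphi(X_{k,n})\le g(\ln(kn))$ for all $k,n\ge1$. Set $a_{m,j}=g(\ln(mj))\psi^{-1}(\ln(mj))$, $Y_{m,j}=\max_{1\le k\le m,1\le n\le j}X_{k,n}-a_{m,j}$ and $Y^-_{m,j}=\max(-Y_{m,j},0)$. Let $\kappa$ be a positive increasing differentiable function whose derivative $r=\kappa'$ is non-decreasing on $(0,\infty)$. Assume there is $C>0$ such that for all $k,n\ge1$ and all $x>0$ $$P\left(\frac{X_{k,n}}{g(\ln(kn))}<x\right)\le\exp\left(-Ce^{-\kappa(x)}\right),$$ and that $$\psi(x)-\kappa\left(\frac{x\,g(x)}{g(0)}\right)\ge C_0(x)$$ for some function $C_0$. Suppose there exist $A,\varepsilon_0>0$ such that for every $\varepsilon\in(0,\varepsilon_0]$ $$\int_A^{+\infty}\exp\left(-\frac{Cy}{2}\exp\left(-\kappa\left(\frac{g(\ln y)}{g(0)}\psi^{-1}(\ln y)-\frac{\varepsilon}{g(\ln y)}\right)\right)\right)dy<+\infty$$ and $$\int_A^{+\infty}\psi(y)q_\varphi(y)\exp\left(\psi(y)-\frac C2\exp\left(C_0(y)+\frac{\varepsilon\, r\left(\frac{y\,g(\psi(y))}{g(0)}-\frac{\varepsilon}{g(\psi(y))}\right)}{g(\psi(y))}\right)\right)dy<+\infty.$$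 Then $\lim_{m\vee j\to\infty}Y^-_{m,j}=0$ almost surely.
   Context: An Orlicz $N$-function is a continuous even convex function $\varphi:\mathbb R\to\mathbb R$ with $\varphi(0)=0$, increasing on $(0,\infty)$, with $\varphi(x)/x\to0$ as $x\to0$ and $\varphi(x)/x\to+\infty$ as $x\to+\infty$. It can be written $\varphi(x)=\int_0^{|x|}p_\varphi(t)\,dt$ with non-decreasing density $p_\varphi$; its generalized inverse is $q_\varphi(t)=\sup\{u\ge0:p_\varphi(u)\le t\}$. The Young–Fenchel transform is $\psi(x)=\sup_{y\in\mathbb R}(xy-\varphi(y))$, with $\psi(x)=\int_0^{|x|}q_\varphi(t)dt$; $\psi^{-1}$ is the inverse of $\psi$ on $[0,\infty)$. A random variable $X$ is $\varphi$-subgaussian if $EX=0$ and there is a finite $a>0$ with $E\exp(tX)\le\exp(\varphi(at))$ for all $t$; $\tau_\varphi(X)=\inf\{a>0:E\exp(tX)\le\exp(\varphi(at))\ \forall t\}$. $\lim_{m\vee j\to\infty}b_{m,j}=b$ means: for every $\varepsilon>0$ there is $N$ with $|b_{m,j}-b|<\varepsilon$ whenever $\max(m,j)\ge N$. *)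

theory Defs
  imports "HOL-Probability.Probability"
begin

definition orlicz_N :: "(real \<Rightarrow> real) \<Rightarrow> bool" where
  "orlicz_N \<phi> \<longleftrightarrow> continuous_on UNIV \<phi> \<and> (\<forall>x. \<phi> (-x) = \<phi> x) \<and> convex_on UNIV \<phi>
     \<and> \<phi> 0 = 0 \<and> strict_mono_on {0<..} \<phi>
     \<and> ((\<lambda>x. \<phi> x / x) \<longlongrightarrow> 0) (at_right 0)
     \<and> filterlim (\<lambda>x. \<phi> x / x) at_top at_top"

definition orlicz_density :: "(real \<Rightarrow> real) \<Rightarrow> (real \<Rightarrow> real) \<Rightarrow> bool" where
  "orlicz_density \<phi> p \<longleftrightarrow> mono_on {0..} p \<and> (\<forall>x. \<phi> x = integral {0..\<bar>x\<bar>} p)"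

definition gen_inv :: "(real \<Rightarrow> real) \<Rightarrow> real \<Rightarrow> real" where
  "gen_inv p t = Sup {u. u \<ge> 0 \<and> p u \<le> t}"

definition young_fenchel :: "(real \<Rightarrow> real) \<Rightarrow> real \<Rightarrow> real" where
  "young_fenchel \<phi> x = (SUP y. x * y - \<phi> y)"

definition inv_nonneg :: "(real \<Rightarrow> real) \<Rightarrow> real \<Rightarrow> real" where
  "inv_nonneg \<psi> s = (THE x. x \<ge> 0 \<and> \<psi> x = s)"

definition mgf_bound :: "'a measure \<Rightarrow> (real \<Rightarrow> real) \<Rightarrow> ('a \<Rightarrow> real) \<Rightarrow> real \<Rightarrow> bool" where
  "mgf_bound M \<phi> X a \<longleftrightarrow>
     (\<forall>t. (\<integral>\<^sup>+ \<omega>. ennreal (exp (t * X \<omega>)) \<partial>M) \<le> ennreal (exp (\<phi> (a * t))))"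

definition phi_subgaussian :: "'a measure \<Rightarrow> (real \<Rightarrow> real) \<Rightarrow> ('a \<Rightarrow> real) \<Rightarrow> bool" where
  "phi_subgaussian M \<phi> X \<longleftrightarrow> X \<in> borel_measurable M \<and> integrable M X \<and> integral\<^sup>L M X = 0
     \<and> (\<exists>a>0. mgf_bound M \<phi> X a)"

definition tau_phi :: "'a measure \<Rightarrow> (real \<Rightarrow> real) \<Rightarrow> ('a \<Rightarrow> real) \<Rightarrow> real" where
  "tau_phi M \<phi> X = Inf {a. a > 0 \<and> mgf_bound M \<phi> X a}"

definition double_lim :: "(nat \<Rightarrow> nat \<Rightarrow> real) \<Rightarrow> real \<Rightarrow> bool" where
  "double_lim b l \<longleftrightarrow> (\<forall>e>0. \<exists>N. \<forall>m j. m \<ge> 1 \<longrightarrow> j \<ge> 1 \<longrightarrow> max m j \<ge> N \<longrightarrow> \<bar>b m j - l\<bar> < e)"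

end

theory Submission
  imports Defs "HOL-Library.Nat_Bijection"
begin


lemma phi_nonneg:
  assumes "orlicz_N \<phi>" shows "\<phi> y \<ge> 0"
proof -
  have ev: "\<And>x. \<phi> (-x) = \<phi> x" and c: "continuous_on UNIV \<phi>" and z: "\<phi> 0 = 0"
    and sm: "strict_mono_on {0<..} \<phi>" using assms unfolding orlicz_N_def by auto
  have pos: "\<phi> y \<ge> 0" if "y > 0" for y
  proof -
    have "(\<phi> \<longlongrightarrow> \<phi> 0) (at_right 0)"
      using c by (meson UNIV_I continuous_on_def filterlim_at_split tendsto_within_subset top_greatest)
    moreover have "eventually (\<lambda>a. \<phi> a \<le> \<phi> y) (at_right 0)"
      unfolding eventually_at_right_field using that
      by (intro exI[of _ y]) (auto intro!: less_imp_le[OF strict_mono_onD[OF sm]])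
    ultimately have "\<phi> 0 \<le> \<phi> y"
      by (intro tendsto_upperbound) auto
    thus ?thesis using z by simp
  qed
  show ?thesis
  proof (cases "y > 0")
    case True then show ?thesis using pos by auto
  next
    case False
    show ?thesis
    proof (cases "y = 0")
      case True then show ?thesis using z by simp
    next
      case False
      then have "-y > 0" using \<open>\<not> y > 0\<close> by auto
      then show ?thesis using pos[of "-y"] ev[of y] by simp
    qed
  qed
qed

lemma yf_bound:
  assumes "orlicz_N \<phi>" shows "\<exists>B. \<forall>y. x*y - \<phi> y \<le> B"
proof -
  have ev: "\<And>x. \<phi> (-x) = \<phi> x" and lim: "filterlim (\<lambda>x. \<phi> x / x) at_top at_top"
    using assms unfolding orlicz_N_def by auto
  have "eventually (\<lambda>y. \<phi> y / y \<ge> \<bar>x\<bar>) at_top"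
    using lim by (simp add: filterlim_at_top)
  then obtain R where R: "\<And>y. y \<ge> R \<Longrightarrow> \<phi> y / y \<ge> \<bar>x\<bar>"
    unfolding eventually_at_top_linorder by auto
  define R' where "R' = max R 1"
  have big: "\<phi> y \<ge> \<bar>x\<bar> * y" if "y \<ge> R'" for y
  proof -
    have "y > 0" "y \<ge> R" using that unfolding R'_def by auto
    then show ?thesis using R[of y] by (simp add: field_simps)
  qed
  have "x*y - \<phi> y \<le> \<bar>x\<bar> * R'" for y
  proof -
    have xy: "x*y \<le> \<bar>x\<bar> * \<bar>y\<bar>" by (metis abs_ge_self abs_mult)
    consider "\<bar>y\<bar> \<le> R'" | "y \<ge> R'" | "-y \<ge> R'" by linarith
    then show ?thesis
    proof cases
      case 1
      then show ?thesis using xy phi_nonneg[OF assms, of y]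
        by (smt (verit) abs_ge_zero mult_left_mono)
    next
      case 2
      then show ?thesis using xy big[of y] unfolding R'_def
        by (smt (verit) abs_ge_zero mult_nonneg_nonneg)
    next
      case 3
      then show ?thesis using xy big[of "-y"] ev[of y] unfolding R'_def
        by (smt (verit) abs_ge_zero mult_nonneg_nonneg)
    qed
  qed
  then show ?thesis by blast
qed

lemma yf_bdd: "orlicz_N \<phi> \<Longrightarrow> bdd_above (range (\<lambda>y. x*y - \<phi> y))"
  using yf_bound[of \<phi> x] by (auto simp: bdd_above_def)

lemma yf_ge: "orlicz_N \<phi> \<Longrightarrow> young_fenchel \<phi> x \<ge> x*y - \<phi> y"
  unfolding young_fenchel_def by (rule cSUP_upper[OF _ yf_bdd]) auto

lemma yf_le: "(\<And>y. x*y - \<phi> y \<le> B) \<Longrightarrow> young_fenchel \<phi> x \<le> B"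
  unfolding young_fenchel_def by (rule cSUP_least) auto

lemma yf_zero: "orlicz_N \<phi> \<Longrightarrow> young_fenchel \<phi> 0 = 0"
  using yf_ge[of \<phi> 0 0] yf_le[of 0 \<phi> 0] phi_nonneg[of \<phi>]
  by (force simp: orlicz_N_def)

lemma yf_nonneg: "orlicz_N \<phi> \<Longrightarrow> young_fenchel \<phi> x \<ge> 0"
  using yf_ge[of \<phi> x 0] by (simp add: orlicz_N_def)

lemma yf_pos:
  assumes "orlicz_N \<phi>" "x > 0" shows "young_fenchel \<phi> x > 0"
proof -
  have "((\<lambda>x. \<phi> x / x) \<longlongrightarrow> 0) (at_right 0)" using assms unfolding orlicz_N_def by auto
  then have "eventually (\<lambda>y. \<phi> y / y < x) (at_right 0)"
    using assms(2) by (intro order_tendstoD) auto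
  then obtain b where b: "b > 0" "\<And>y. 0 < y \<Longrightarrow> y < b \<Longrightarrow> \<phi> y / y < x"
    unfolding eventually_at_right_field by auto
  have "\<phi> (b/2) / (b/2) < x" using b(2)[of "b/2"] b(1) by auto
  then have "x * (b/2) - \<phi> (b/2) > 0" using b by (simp add: field_simps)
  then show ?thesis using yf_ge[OF assms(1), of x "b/2"] by linarith
qed

lemma yf_convex:
  assumes "orlicz_N \<phi>" shows "convex_on UNIV (young_fenchel \<phi>)"
proof (rule convex_onI)
  fix t u v :: real assume t: "t > 0" "t < 1"
  show "young_fenchel \<phi> ((1 - t) *\<^sub>R u + t *\<^sub>R v) \<le> (1 - t) * young_fenchel \<phi> u + t * young_fenchel \<phi> v"
  proof (rule yf_le)
    fix y
    have "((1 - t) * u + t * v) * y - \<phi> y = (1 - t) * (u * y - \<phi> y) + t * (v * y - \<phi> y)"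
      by (simp add: algebra_simps)
    also have "\<dots> \<le> (1 - t) * young_fenchel \<phi> u + t * young_fenchel \<phi> v"
      using t yf_ge[OF assms, of u y] yf_ge[OF assms, of v y]
      by (intro add_mono mult_left_mono) auto
    finally show "((1 - t) *\<^sub>R u + t *\<^sub>R v) * y - \<phi> y \<le> (1 - t) * young_fenchel \<phi> u + t * young_fenchel \<phi> v"
      by simp
  qed
qed auto

lemma yf_cont: "orlicz_N \<phi> \<Longrightarrow> continuous_on UNIV (young_fenchel \<phi>)"
  by (rule convex_on_continuous[OF _ yf_convex]) auto

lemma yf_strict:
  assumes "orlicz_N \<phi>" "0 \<le> x1" "x1 < x2"
  shows "young_fenchel \<phi> x1 < young_fenchel \<phi> x2"
proof (cases "x1 = 0")
  case True then show ?thesis using yf_zero[OF assms(1)] yf_pos[OF assms(1)] assms by auto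
next
  case False
  let ?f = "young_fenchel \<phi>"
  define t where "t = x1 / x2"
  have t: "0 < t" "t < 1" using assms False unfolding t_def by auto
  have "x1 = (1 - t) *\<^sub>R 0 + t *\<^sub>R x2" using assms False unfolding t_def by simp
  then have "?f x1 \<le> (1 - t) * ?f 0 + t * ?f x2"
    using yf_convex[OF assms(1)] t unfolding convex_on_def
    by (metis UNIV_I less_imp_le diff_add_cancel diff_ge_0_iff_ge)
  also have "\<dots> = t * ?f x2" using yf_zero[OF assms(1)] by simp
  also have "\<dots> < ?f x2" using t yf_pos[OF assms(1), of x2] assms by auto
  finally show ?thesis .
qed

lemma yf_mono: "orlicz_N \<phi> \<Longrightarrow> 0 \<le> x1 \<Longrightarrow> x1 \<le> x2 \<Longrightarrow> young_fenchel \<phi> x1 \<le> young_fenchel \<phi> x2"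
  using yf_strict[of \<phi> x1 x2] by (cases "x1 = x2") auto

lemma yf_inv:
  assumes "orlicz_N \<phi>" "s \<ge> 0"
  shows "inv_nonneg (young_fenchel \<phi>) s \<ge> 0 \<and> young_fenchel \<phi> (inv_nonneg (young_fenchel \<phi>) s) = s"
proof -
  let ?f = "young_fenchel \<phi>"
  have "?f (s + \<phi> 1) \<ge> s" using yf_ge[OF assms(1), of "s + \<phi> 1" 1] by simp
  moreover have "?f 0 \<le> s" using yf_zero[OF assms(1)] assms by simp
  moreover have "0 \<le> s + \<phi> 1" using phi_nonneg[OF assms(1), of 1] assms by simp
  ultimately obtain x where x: "0 \<le> x" "?f x = s"
    using IVT'[of ?f 0 s "s + \<phi> 1"] continuous_on_subset[OF yf_cont[OF assms(1)]] by blast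
  have "\<exists>!x. x \<ge> 0 \<and> ?f x = s"
  proof (rule ex1I[of _ x])
    show "0 \<le> x \<and> ?f x = s" using x by auto
    fix y assume "0 \<le> y \<and> ?f y = s"
    then show "y = x" using yf_strict[OF assms(1), of x y] yf_strict[OF assms(1), of y x] x
      by (cases "x < y"; cases "y < x") auto
  qed
  then show ?thesis unfolding inv_nonneg_def by (rule theI')
qed

lemma inv_mono:
  assumes "orlicz_N \<phi>" "0 \<le> s1" "s1 \<le> s2"
  shows "inv_nonneg (young_fenchel \<phi>) s1 \<le> inv_nonneg (young_fenchel \<phi>) s2"
  using yf_inv[OF assms(1), of s1] yf_inv[OF assms(1), of s2] assms
    yf_strict[OF assms(1), of "inv_nonneg (young_fenchel \<phi>) s2" "inv_nonneg (young_fenchel \<phi>) s1"]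
  by force

lemma inv_large:
  assumes "orlicz_N \<phi>" "0 \<le> t" "young_fenchel \<phi> t < s"
  shows "inv_nonneg (young_fenchel \<phi>) s > t"
proof (rule ccontr)
  assume "\<not> ?thesis"
  moreover have "s \<ge> 0" using assms yf_nonneg[OF assms(1), of t] by linarith
  ultimately show False using yf_inv[OF assms(1), of s] yf_mono[OF assms(1), of "inv_nonneg (young_fenchel \<phi>) s" t] assms
    by auto
qed



lemma int_lower:
  fixes f :: "real \<Rightarrow> real"
  assumes f: "set_integrable lborel {A..} f" and nn: "\<And>y. y \<ge> A \<Longrightarrow> f y \<ge> 0"
    and "A \<le> n" "n \<ge> 0" and c: "\<And>y. n \<le> y \<Longrightarrow> y \<le> 3*n/2 \<Longrightarrow> c \<le> f y"
  shows "(n/2) * c \<le> (LINT y:{A..}|lborel. f y)"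
proof -
  have i1: "integrable lborel (\<lambda>y. indicator {n..3*n/2} y * c)"
    by (intro integrable_mult_left integrable_real_indicator) (auto simp: emeasure_lborel_Icc_eq)
  have i2: "integrable lborel (\<lambda>y. indicator {A..} y *\<^sub>R f y)"
    using f unfolding set_integrable_def .
  have le: "(\<integral>y. indicator {n..3*n/2} y * c \<partial>lborel) \<le> (\<integral>y. indicator {A..} y *\<^sub>R f y \<partial>lborel)"
  proof (rule integral_mono[OF i1 i2])
    fix y
    show "indicator {n..3*n/2} y * c \<le> indicator {A..} y *\<^sub>R f y"
      using c[of y] nn[of y] assms(3) by (auto simp: indicator_def)
  qed
  have eq: "(\<integral>y. indicator {n..3*n/2} y * c \<partial>lborel) = (3*n/2 - n) * c"
    using assms(4) by simp
  have "(n/2)*c = (3*n/2 - n) * c" by simp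
  then show ?thesis unfolding set_lebesgue_integral_def using le eq by linarith
qed

lemma decode_le: "fst (prod_decode i) \<le> i" "snd (prod_decode i) \<le> i"
proof -
  obtain a b where ab: "prod_decode i = (a, b)" by (cases "prod_decode i")
  then have "i = prod_encode (a, b)" by (metis prod_decode_inverse)
  then show "fst (prod_decode i) \<le> i" "snd (prod_decode i) \<le> i"
    using ab le_prod_encode_1[of a b] le_prod_encode_2[of b a] by auto
qed

lemma pair_summable:
  fixes h :: "nat \<Rightarrow> nat \<Rightarrow> real"
  assumes nn: "\<And>m j. 0 \<le> h m j"
    and le: "\<And>m j. h m j \<le> K * (real (Suc m) powr (-4/3) * real (Suc j) powr (-4/3))"
  shows "summable (\<lambda>i. h (fst (prod_decode i)) (snd (prod_decode i)))"
proof -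
  define a where "a m = real (Suc m) powr (-4/3)" for m
  have sa: "summable a"
  proof -
    have "summable (\<lambda>n. real n powr (-4/3))" by (subst summable_real_powr_iff) auto
    then have "summable (\<lambda>n. real (Suc n) powr (-4/3))"
      by (subst summable_Suc_iff)
    then show ?thesis unfolding a_def .
  qed
  have a0: "a m \<ge> 0" for m unfolding a_def by simp
  have K0: "K \<ge> 0" using nn[of 0 0] le[of 0 0] by simp
  let ?S = "suminf a"
  show ?thesis
  proof (rule bounded_imp_summable)
    show "0 \<le> h (fst (prod_decode i)) (snd (prod_decode i))" for i using nn by simp
    fix n
    have "(\<Sum>i\<le>n. h (fst (prod_decode i)) (snd (prod_decode i))) = (\<Sum>p\<in>prod_decode ` {..n}. h (fst p) (snd p))"
      by (subst sum.reindex) (auto intro: inj_prod_decode)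
    also have "\<dots> \<le> (\<Sum>p\<in>{..n}\<times>{..n}. h (fst p) (snd p))"
      using decode_le by (intro sum_mono2) (auto simp: nn intro: order_trans, metis fst_conv order_trans, metis snd_conv order_trans)
    also have "\<dots> \<le> (\<Sum>p\<in>{..n}\<times>{..n}. K * (a (fst p) * a (snd p)))"
      using le unfolding a_def by (intro sum_mono) auto
    also have "\<dots> = K * ((\<Sum>m\<le>n. a m) * (\<Sum>j\<le>n. a j))"
    proof -
      have "(\<Sum>p\<in>{..n}\<times>{..n}. K * (a (fst p) * a (snd p))) = (\<Sum>(x,y)\<in>{..n}\<times>{..n}. K * (a x * a y))"
        by (simp add: case_prod_beta)
      also have "\<dots> = (\<Sum>x\<le>n. \<Sum>y\<le>n. K * (a x * a y))"
        by (rule sum.cartesian_product[symmetric])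
      also have "\<dots> = K * (\<Sum>x\<le>n. \<Sum>y\<le>n. a x * a y)"
        by (simp add: sum_distrib_left)
      also have "\<dots> = K * ((\<Sum>m\<le>n. a m) * (\<Sum>j\<le>n. a j))"
        by (simp only: sum_product)
      finally show ?thesis .
    qed
    also have "\<dots> \<le> K * (?S * ?S)"
      using sum_le_suminf[OF sa, of "{..n}"] a0 K0 suminf_nonneg[OF sa a0]
      by (intro mult_left_mono mult_mono) (auto intro: sum_nonneg)
    finally show "(\<Sum>i\<le>n. h (fst (prod_decode i)) (snd (prod_decode i))) \<le> K * (?S * ?S)" .
  qed
qed



lemma (in prob_space) key_prob:
  fixes X :: "nat \<Rightarrow> nat \<Rightarrow> 'a \<Rightarrow> real" and g \<kappa> :: "real \<Rightarrow> real"
  assumes indep: "indep_vars (\<lambda>_. borel) (\<lambda>(k, n). X k n) ({1..} \<times> {1..})"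
    and meas: "\<And>k n. k \<ge> 1 \<Longrightarrow> n \<ge> 1 \<Longrightarrow> X k n \<in> borel_measurable M"
    and g_pos: "\<And>x. x \<ge> 0 \<Longrightarrow> g x > 0" and g_mono: "mono_on {0..} g"
    and tail: "\<And>k n x. k \<ge> 1 \<Longrightarrow> n \<ge> 1 \<Longrightarrow> x > 0 \<Longrightarrow>
        measure M {\<omega> \<in> space M. X k n \<omega> / g (ln (real (k * n))) < x} \<le> exp (- C * exp (- \<kappa> x))"
    and m: "m \<ge> 1" and j: "j \<ge> 1" and b: "b \<ge> 0" and eps: "\<epsilon> > 0"
    and hpos: "g (ln (real (m*j))) / g 0 * b - \<epsilon> / g (ln (real (m*j))) > 0"
  shows "prob {\<omega> \<in> space M. \<forall>k\<in>{1..m}. \<forall>n\<in>{1..j}. X k n \<omega> < g (ln (real (m*j))) * b - \<epsilon>}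
     \<le> exp (- C * real (m*j) * exp (- \<kappa> (g (ln (real (m*j))) / g 0 * b - \<epsilon> / g (ln (real (m*j))))))"
proof -
  define L where "L = g (ln (real (m*j)))"
  define h where "h = L / g 0 * b - \<epsilon> / L"
  define c where "c = L * b - \<epsilon>"
  define J where "J = {1..m} \<times> {1..j}"
  define Z where "Z = (\<lambda>(k, n). X k n)"
  define S where "S i = Z i -` {..<c} \<inter> space M" for i
  have J: "J \<subseteq> {1..} \<times> {1..}" "J \<noteq> {}" "finite J" using m j unfolding J_def by auto
  have isets: "indep_sets (\<lambda>i. { Z i -` A \<inter> space M | A. A \<in> sets borel}) ({1..} \<times> {1..})"
    using indep unfolding indep_vars_def2 Z_def by auto
  have "S \<in> Pi J (\<lambda>i. { Z i -` A \<inter> space M | A. A \<in> sets borel})"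
    unfolding S_def Pi_def by (auto intro!: exI[of _ "{..<c}"])
  then have pe: "prob (\<Inter>i\<in>J. S i) = (\<Prod>i\<in>J. prob (S i))"
    using isets J unfolding indep_sets_def by blast
  have seteq: "{\<omega> \<in> space M. \<forall>k\<in>{1..m}. \<forall>n\<in>{1..j}. X k n \<omega> < L * b - \<epsilon>} = (\<Inter>i\<in>J. S i)"
    using J(2) unfolding S_def J_def Z_def c_def by auto
  have "1 \<le> m*j" using m j by (simp add: one_le_mult_iff)
  then have "0 \<le> ln (real (m*j))" by (metis ln_ge_zero of_nat_1 of_nat_le_iff)
  then have L0: "L > 0" unfolding L_def using g_pos by blast
  have g0: "g 0 > 0" using g_pos by simp
  have each: "prob (S i) \<le> exp (- C * exp (- \<kappa> h))" if iJ: "i \<in> J" for i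
  proof -
    obtain k n where i: "i = (k, n)" and k: "1 \<le> k" "k \<le> m" and n: "1 \<le> n" "n \<le> j"
      using iJ unfolding J_def by auto
    define gk where "gk = g (ln (real (k*n)))"
    have kn: "1 \<le> k*n" "k*n \<le> m*j" using k n by (auto intro: mult_le_mono one_le_mult_iff[THEN iffD2])
    have r1: "1 \<le> real (k*n)" "real (k*n) \<le> real (m*j)" using kn of_nat_le_iff by (metis of_nat_1, blast)
    have lnk: "0 \<le> ln (real (k*n))" "ln (real (k*n)) \<le> ln (real (m*j))"
      using r1 by auto
    have gk: "g 0 \<le> gk" "gk \<le> L" unfolding gk_def L_def
      using g_mono lnk by (auto intro: mono_onD)
    have gk0: "gk > 0" using g0 gk by linarith
    have ch: "c / gk \<le> h"
    proof -
      have "c / gk = L * b / gk - \<epsilon> / gk" unfolding c_def by (simp add: diff_divide_distrib)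
      moreover have "L * b / gk \<le> L * b / g 0"
        using gk g0 L0 b by (intro divide_left_mono) auto
      moreover have "\<epsilon> / L \<le> \<epsilon> / gk"
        using gk gk0 eps by (intro divide_left_mono) auto
      ultimately show ?thesis unfolding h_def by simp
    qed
    have sub: "S i \<subseteq> {\<omega> \<in> space M. X k n \<omega> / gk < h}"
    proof
      fix \<omega> assume "\<omega> \<in> S i"
      then have "X k n \<omega> < c" "\<omega> \<in> space M" unfolding S_def Z_def i by auto
      then have "X k n \<omega> / gk < c / gk" using gk0 by (simp add: divide_strict_right_mono)
      then show "\<omega> \<in> {\<omega> \<in> space M. X k n \<omega> / gk < h}" using ch \<open>\<omega> \<in> space M\<close> by auto
    qed
    have "{\<omega> \<in> space M. X k n \<omega> / gk < h} \<in> events"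
      using meas[OF k(1) n(1)] by measurable
    then have "prob (S i) \<le> prob {\<omega> \<in> space M. X k n \<omega> / gk < h}"
      using sub by (rule finite_measure_mono[rotated])
    also have "\<dots> \<le> exp (- C * exp (- \<kappa> h))"
      using tail[OF k(1) n(1), of h] hpos unfolding gk_def h_def L_def by simp
    finally show ?thesis .
  qed
  have "(\<Prod>i\<in>J. prob (S i)) \<le> (\<Prod>i\<in>J. exp (- C * exp (- \<kappa> h)))"
    using each by (intro prod_mono) auto
  also have "\<dots> = exp (- C * exp (- \<kappa> h)) ^ (m*j)"
    unfolding J_def by simp
  also have "\<dots> = exp (- C * real (m*j) * exp (- \<kappa> h))"
    by (subst exp_of_nat_mult[symmetric]) (simp add: algebra_simps)
  finally show ?thesis using pe seteq unfolding h_def L_def by simp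
qed



theorem theorem2:
  fixes M :: "'a measure" and \<phi> p g \<kappa> r C0 :: "real \<Rightarrow> real"
    and X :: "nat \<Rightarrow> nat \<Rightarrow> 'a \<Rightarrow> real" and C A \<epsilon>0 :: real
  defines "\<psi> \<equiv> young_fenchel \<phi>"
  defines "q \<equiv> gen_inv p"
  defines "a \<equiv> (\<lambda>m j. g (ln (real (m * j))) * inv_nonneg \<psi> (ln (real (m * j))))"
  defines "Y \<equiv> (\<lambda>m j \<omega>. Max {X k n \<omega> | k n. 1 \<le> k \<and> k \<le> m \<and> 1 \<le> n \<and> n \<le> j} - a m j)"
  defines "Yneg \<equiv> (\<lambda>m j \<omega>. max (- Y m j \<omega>) 0)"
  assumes "prob_space M"
    and "orlicz_N \<phi>" and "orlicz_density \<phi> p"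
    and indep: "prob_space.indep_vars M (\<lambda>_. borel) (\<lambda>(k, n). X k n) ({1..} \<times> {1..})"
    and subg: "\<And>k n. k \<ge> 1 \<Longrightarrow> n \<ge> 1 \<Longrightarrow> phi_subgaussian M \<phi> (X k n)"
    and g_pos: "\<And>x. x \<ge> 0 \<Longrightarrow> g x > 0" and g_mono: "mono_on {0..} g"
    and tau_le: "\<And>k n. k \<ge> 1 \<Longrightarrow> n \<ge> 1 \<Longrightarrow> tau_phi M \<phi> (X k n) \<le> g (ln (real (k * n)))"
    and \<kappa>_pos: "\<And>x. x > 0 \<Longrightarrow> \<kappa> x > 0" and \<kappa>_inc: "strict_mono_on {0<..} \<kappa>"
    and \<kappa>_deriv: "\<And>x. x > 0 \<Longrightarrow> (\<kappa> has_real_derivative r x) (at x)"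
    and r_mono: "mono_on {0<..} r"
    and "C > 0"
    and tail: "\<And>k n x. k \<ge> 1 \<Longrightarrow> n \<ge> 1 \<Longrightarrow> x > 0 \<Longrightarrow>
        measure M {\<omega> \<in> space M. X k n \<omega> / g (ln (real (k * n))) < x} \<le> exp (- C * exp (- \<kappa> x))"
    and C0: "\<And>x. x > 0 \<Longrightarrow> \<psi> x - \<kappa> (x * g x / g 0) \<ge> C0 x"
    and "A > 0" and "\<epsilon>0 > 0"
    and int1: "\<And>\<epsilon>. 0 < \<epsilon> \<Longrightarrow> \<epsilon> \<le> \<epsilon>0 \<Longrightarrow> set_integrable lborel {A..}
        (\<lambda>y. exp (- (C * y / 2) * exp (- \<kappa> (g (ln y) / g 0 * inv_nonneg \<psi> (ln y) - \<epsilon> / g (ln y)))))"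
    and int2: "\<And>\<epsilon>. 0 < \<epsilon> \<Longrightarrow> \<epsilon> \<le> \<epsilon>0 \<Longrightarrow> set_integrable lborel {A..}
        (\<lambda>y. \<psi> y * q y * exp (\<psi> y - C / 2 * exp (C0 y
            + \<epsilon> * r (y * g (\<psi> y) / g 0 - \<epsilon> / g (\<psi> y)) / g (\<psi> y))))"
  shows "AE \<omega> in M. double_lim (\<lambda>m j. Yneg m j \<omega>) 0"
proof -
  interpret P: prob_space M by (rule \<open>prob_space M\<close>)
  have phiN: "orlicz_N \<phi>" by fact
  have Cpos: "C > 0" by fact
  have Apos: "A > 0" by fact
  have meas: "X k n \<in> borel_measurable M" if "k \<ge> 1" "n \<ge> 1" for k n
    using subg[OF that] unfolding phi_subgaussian_def by auto
  have indep': "P.indep_vars (\<lambda>_. borel) (\<lambda>(k, n). X k n) ({1..} \<times> {1..})" by (rule indep)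
  have g0: "g 0 > 0" using g_pos by simp
  have inv: "inv_nonneg \<psi> s \<ge> 0" "\<psi> (inv_nonneg \<psi> s) = s" if "s \<ge> 0" for s
    using yf_inv[OF phiN that] unfolding \<psi>_def by auto
  have invmono: "inv_nonneg \<psi> s1 \<le> inv_nonneg \<psi> s2" if "0 \<le> s1" "s1 \<le> s2" for s1 s2
    using inv_mono[OF phiN that] unfolding \<psi>_def by auto
  have invlarge: "inv_nonneg \<psi> s > t" if "0 \<le> t" "\<psi> t < s" for s t
    using inv_large[OF phiN, of t s] that unfolding \<psi>_def by auto
  define E where "E \<epsilon> m j = {\<omega> \<in> space M. \<forall>k\<in>{1..m}. \<forall>n\<in>{1..j}. X k n \<omega> < a m j - \<epsilon>}" for \<epsilon> m j
  define Ev where "Ev \<epsilon> i = E \<epsilon> (Suc (fst (prod_decode i))) (Suc (snd (prod_decode i)))" for \<epsilon> i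
  have Emeas: "E \<epsilon> m j \<in> P.events" for \<epsilon> m j
  proof -
    have "E \<epsilon> m j = space M \<inter> (\<Inter>k\<in>{1..m}. \<Inter>n\<in>{1..j}. {\<omega> \<in> space M. X k n \<omega> < a m j - \<epsilon>})"
      unfolding E_def by auto
    also have "\<dots> \<in> P.events"
    proof (cases "m \<ge> 1 \<and> j \<ge> 1")
      case True
      have ms: "{\<omega> \<in> space M. X k n \<omega> < c} \<in> P.events" if "k \<ge> 1" "n \<ge> 1" for k n c
        using meas[OF that] by measurable
      show ?thesis
      proof (rule sets.Int[OF sets.top])
        show "(\<Inter>k\<in>{1..m}. \<Inter>n\<in>{1..j}. {\<omega> \<in> space M. X k n \<omega> < a m j - \<epsilon>}) \<in> P.events"
        proof (rule sets.finite_INT)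
          fix k assume k: "k \<in> {1..m}"
          show "(\<Inter>n\<in>{1..j}. {\<omega> \<in> space M. X k n \<omega> < a m j - \<epsilon>}) \<in> P.events"
          proof (rule sets.finite_INT)
            fix n assume n: "n \<in> {1..j}"
            show "{\<omega> \<in> space M. X k n \<omega> < a m j - \<epsilon>} \<in> P.events"
              using k n by (intro ms) auto
          qed (use True in simp_all)
        qed (use True in simp_all)
      qed
    next
      case False
      then have "{1..m} = {} \<or> {1..j} = {}" by auto
      then have "(\<Inter>k\<in>{1..m}. \<Inter>n\<in>{1..j}. {\<omega> \<in> space M. X k n \<omega> < a m j - \<epsilon>}) = UNIV"
        by auto
      then show ?thesis by simp
    qed
    finally show ?thesis .
  qed
  have main: "AE \<omega> in M. eventually (\<lambda>i. \<omega> \<in> space M - Ev \<epsilon> i) sequentially"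
    if eps: "0 < \<epsilon>" "\<epsilon> \<le> \<epsilon>0" for \<epsilon>
  proof -
    define h1 where "h1 y = g (ln y) / g 0 * inv_nonneg \<psi> (ln y) - \<epsilon> / g (ln y)" for y
    define G where "G y = exp (- (C * y / 2) * exp (- \<kappa> (h1 y)))" for y
    have Gi: "set_integrable lborel {A..} G"
      using int1[OF eps] unfolding G_def h1_def .
    define I where "I = (LINT y:{A..}|lborel. G y)"
    define N0 where "N0 = max (max A 1) (exp (\<psi> (\<epsilon> / g 0)) + 1)"
    have N0: "N0 \<ge> A" "N0 \<ge> 1" "N0 > exp (\<psi> (\<epsilon> / g 0))" unfolding N0_def by auto
    have h1pos: "h1 y > 0" if "y \<ge> N0" for y
    proof -
      have y1: "y \<ge> 1" "y > 0" using that N0 by auto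
      have l0: "ln y \<ge> 0" using y1 by simp
      have "ln y > \<psi> (\<epsilon> / g 0)"
        using N0(3) that y1 by (metis exp_le_cancel_iff exp_ln less_le_trans not_le)
      then have iv: "inv_nonneg \<psi> (ln y) > \<epsilon> / g 0" using invlarge eps g0 by auto
      have gl: "g 0 \<le> g (ln y)" using g_mono l0 by (auto intro: mono_onD)
      have "g (ln y) / g 0 * inv_nonneg \<psi> (ln y) \<ge> inv_nonneg \<psi> (ln y)"
        using gl g0 inv(1)[OF l0] by (simp add: field_simps mult_right_mono)
      moreover have "\<epsilon> / g (ln y) \<le> \<epsilon> / g 0"
        using gl g0 eps by (intro divide_left_mono) auto
      ultimately show ?thesis unfolding h1_def using iv by linarith
    qed
    have h1mono: "h1 y \<le> h1 y'" if "N0 \<le> y" "y \<le> y'" for y y'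
    proof -
      have y1: "y \<ge> 1" using that N0 by auto
      have l: "0 \<le> ln y" "ln y \<le> ln y'" using y1 that by auto
      have gl: "g 0 \<le> g (ln y)" "g (ln y) \<le> g (ln y')" using g_mono l by (auto intro: mono_onD)
      have "g (ln y) / g 0 * inv_nonneg \<psi> (ln y) \<le> g (ln y') / g 0 * inv_nonneg \<psi> (ln y')"
        using gl g0 inv(1)[OF l(1)] invmono[OF l] by (intro mult_mono divide_right_mono) auto
      moreover have "\<epsilon> / g (ln y') \<le> \<epsilon> / g (ln y)"
        using gl g0 eps by (intro divide_left_mono) auto
      ultimately show ?thesis unfolding h1_def by linarith
    qed
    have bnd: "exp (- C * y * exp (- \<kappa> (h1 y))) \<le> (2 * I) powr (4/3) * y powr (-4/3)"
      if y: "y \<ge> N0" for y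
    proof -
      define v where "v = (C * y / 2) * exp (- \<kappa> (h1 y))"
      have ypos: "y > 0" using y N0 by auto
      have Gge: "exp (- (3/2) * v) \<le> G t" if t: "y \<le> t" "t \<le> 3*y/2" for t
      proof -
        have "h1 y \<le> h1 t" using h1mono y t by auto
        then have "\<kappa> (h1 y) \<le> \<kappa> (h1 t)"
          using h1pos[OF y] strict_mono_onD[OF \<kappa>_inc, of "h1 y" "h1 t"]
          by (cases "h1 y = h1 t") auto
        then have e: "exp (- \<kappa> (h1 t)) \<le> exp (- \<kappa> (h1 y))" by simp
        have "(C * t / 2) * exp (- \<kappa> (h1 t)) \<le> (C * (3*y/2) / 2) * exp (- \<kappa> (h1 y))"
          using e t Cpos ypos by (intro mult_mono) auto
        also have "\<dots> = (3/2) * v" unfolding v_def by simp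
        finally show ?thesis unfolding G_def by simp
      qed
      have "(y/2) * exp (- (3/2) * v) \<le> I"
        unfolding I_def
      proof (rule int_lower[OF Gi])
        show "\<And>t. A \<le> t \<Longrightarrow> 0 \<le> G t" unfolding G_def by simp
        show "A \<le> y" "0 \<le> y" using y N0 ypos by auto
        show "\<And>t. y \<le> t \<Longrightarrow> t \<le> 3 * y / 2 \<Longrightarrow> exp (- (3/2) * v) \<le> G t" by (rule Gge)
      qed
      then have e1: "exp (- (3/2) * v) \<le> 2 * I / y" using ypos by (simp add: field_simps)
      have "exp (- C * y * exp (- \<kappa> (h1 y))) = exp (- (3/2) * v) powr (4/3)"
        unfolding v_def powr_def by simp
      also have "\<dots> \<le> (2 * I / y) powr (4/3)"
        using e1 by (intro powr_mono2) auto
      also have "\<dots> = (2 * I) powr (4/3) * y powr (-4/3)"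
        using ypos e1 by (simp add: powr_divide powr_minus_divide less_le_trans[OF exp_gt_zero])
      finally show ?thesis .
    qed
    define K where "K = max ((2 * I) powr (4/3)) (N0 powr (4/3))"
    have pb: "P.prob (E \<epsilon> m j) \<le> K * real (m*j) powr (-4/3)" if mj: "m \<ge> 1" "j \<ge> 1" for m j
    proof (cases "real (m*j) \<ge> N0")
      case True
      have "1 \<le> m*j" using mj by (simp add: one_le_mult_iff)
      then have l0: "0 \<le> ln (real (m*j))" by (metis ln_ge_zero of_nat_1 of_nat_le_iff)
      have "P.prob (E \<epsilon> m j) \<le> exp (- C * real (m*j) * exp (- \<kappa> (h1 (real (m*j)))))"
        unfolding E_def a_def h1_def
        by (rule P.key_prob[OF indep' meas g_pos g_mono tail mj inv(1)[OF l0] eps(1)])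
          (use h1pos[OF True] in \<open>auto simp: h1_def\<close>)
      also have "\<dots> \<le> (2 * I) powr (4/3) * real (m*j) powr (-4/3)"
        using bnd[OF True] by simp
      also have "\<dots> \<le> K * real (m*j) powr (-4/3)"
        unfolding K_def by (intro mult_right_mono) auto
      finally show ?thesis .
    next
      case False
      have pos: "real (m*j) > 0" using mj by simp
      have "1 \<le> N0 powr (4/3) * real (m*j) powr (-4/3)"
      proof -
        have "real (m*j) powr (4/3) \<le> N0 powr (4/3)"
          using False pos by (intro powr_mono2) auto
        moreover have "real (m*j) powr (4/3) > 0" using mj by simp
        ultimately have "1 \<le> N0 powr (4/3) / real (m*j) powr (4/3)" by simp
        then show ?thesis by (simp add: powr_minus_divide)
      qed
      also have "\<dots> \<le> K * real (m*j) powr (-4/3)"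
        unfolding K_def by (intro mult_right_mono) auto
      finally show ?thesis using P.prob_le_1 by (meson order_trans)
    qed
    have summ: "summable (\<lambda>i. P.prob (Ev \<epsilon> i))"
      unfolding Ev_def
    proof (rule pair_summable[of "\<lambda>m j. P.prob (E \<epsilon> (Suc m) (Suc j))" K])
      fix m j
      show "0 \<le> P.prob (E \<epsilon> (Suc m) (Suc j))" by simp
      show "P.prob (E \<epsilon> (Suc m) (Suc j)) \<le> K * (real (Suc m) powr (- 4 / 3) * real (Suc j) powr (- 4 / 3))"
      proof -
        have "real (Suc m * Suc j) powr (-4/3) = real (Suc m) powr (-4/3) * real (Suc j) powr (-4/3)"
          unfolding of_nat_mult by (rule powr_mult)
        then show ?thesis using pb[of "Suc m" "Suc j"] by simp
      qed
    qed
    show ?thesis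
    proof (rule borel_cantelli_AE1)
      show "\<And>i. Ev \<epsilon> i \<in> P.events" unfolding Ev_def by (rule Emeas)
      show "emeasure M (Ev \<epsilon> i) < \<infinity>" for i
      proof -
        have "emeasure M (Ev \<epsilon> i) \<noteq> top" by (rule P.emeasure_finite)
        then show ?thesis unfolding infinity_ennreal_def using less_top by blast
      qed
      show "summable (\<lambda>i. P.prob (Ev \<epsilon> i))" by (rule summ)
    qed
  qed
  have AEall: "AE \<omega> in M. \<forall>i::nat. eventually (\<lambda>l. \<omega> \<in> space M - Ev (\<epsilon>0 / Suc i) l) sequentially"
    using main \<open>\<epsilon>0 > 0\<close> by (subst AE_all_countable) (auto simp: field_simps)
  show ?thesis
    using AEall
  proof eventually_elim
    case (elim \<omega>)
    note H = elim
    show "double_lim (\<lambda>m j. Yneg m j \<omega>) 0"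
      unfolding double_lim_def
    proof (intro allI impI)
      fix e :: real assume e: "e > 0"
      obtain i where i: "inverse (real (Suc i)) < e / \<epsilon>0"
        using reals_Archimedean[of "e / \<epsilon>0"] e \<open>\<epsilon>0 > 0\<close> by auto
      define \<epsilon> where "\<epsilon> = \<epsilon>0 / Suc i"
      have epe: "\<epsilon> < e" "\<epsilon> > 0" using i \<open>\<epsilon>0 > 0\<close> unfolding \<epsilon>_def by (auto simp: field_simps)
      obtain I0 where I0: "\<And>l. l \<ge> I0 \<Longrightarrow> \<omega> \<in> space M - Ev \<epsilon> l"
        using H[rule_format, of i] unfolding eventually_sequentially \<epsilon>_def by auto
      show "\<exists>N. \<forall>m j. 1 \<le> m \<longrightarrow> 1 \<le> j \<longrightarrow> N \<le> max m j \<longrightarrow> \<bar>Yneg m j \<omega> - 0\<bar> < e"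
      proof (intro exI[of _ "Suc I0"] allI impI)
        fix m j :: nat assume mj: "1 \<le> m" "1 \<le> j" "Suc I0 \<le> max m j"
        define l where "l = prod_encode (m - 1, j - 1)"
        have "I0 \<le> l" unfolding l_def using mj
          le_prod_encode_1[of "m-1" "j-1"] le_prod_encode_2[of "j-1" "m-1"] by linarith
        then have "\<omega> \<in> space M - Ev \<epsilon> l" by (rule I0)
        moreover have "Ev \<epsilon> l = E \<epsilon> m j" unfolding Ev_def l_def using mj by simp
        ultimately have "\<omega> \<in> space M" "\<omega> \<notin> E \<epsilon> m j" by auto
        then obtain k n where kn: "k \<in> {1..m}" "n \<in> {1..j}" "X k n \<omega> \<ge> a m j - \<epsilon>"
          unfolding E_def by auto
        define SS where "SS = {X k n \<omega> | k n. 1 \<le> k \<and> k \<le> m \<and> 1 \<le> n \<and> n \<le> j}"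
        have "SS = (\<lambda>(k, n). X k n \<omega>) ` ({1..m} \<times> {1..j})" unfolding SS_def
        proof (intro set_eqI iffI)
          fix x assume "x \<in> {X k n \<omega> |k n. 1 \<le> k \<and> k \<le> m \<and> 1 \<le> n \<and> n \<le> j}"
          then obtain k n where "x = X k n \<omega>" "1 \<le> k" "k \<le> m" "1 \<le> n" "n \<le> j" by blast
          then show "x \<in> (\<lambda>(k, n). X k n \<omega>) ` ({1..m} \<times> {1..j})"
            by (intro image_eqI[of _ _ "(k, n)"]) auto
        next
          fix x assume "x \<in> (\<lambda>(k, n). X k n \<omega>) ` ({1..m} \<times> {1..j})"
          then obtain k n where "x = X k n \<omega>" "1 \<le> k" "k \<le> m" "1 \<le> n" "n \<le> j" by auto
          then show "x \<in> {X k n \<omega> |k n. 1 \<le> k \<and> k \<le> m \<and> 1 \<le> n \<and> n \<le> j}" by blast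
        qed
        then have "finite SS" by simp
        moreover have "X k n \<omega> \<in> SS" using kn unfolding SS_def by (auto simp: image_def; blast)
        ultimately have "X k n \<omega> \<le> Max SS" by simp
        then have "Y m j \<omega> \<ge> - \<epsilon>" using kn unfolding Y_def SS_def by simp
        then show "\<bar>Yneg m j \<omega> - 0\<bar> < e" unfolding Yneg_def using epe by simp
      qed
    qed
  qed
qed


end
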